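(* Let $m,n\ge 2$ and let $W$ be a channel from $\{1,\dots,m\}$ to $\{1,\dots,n\}$. Let $g=\max_{1\le j\le n}(\mathbf{1}W)_j$ and $\alpha_j=\min_{1\le i\le m}W_{i,j}$. Then \[ \underline{P}_W(1)=(g-m+1)_+\quad\text{and}\quad \overline{P}_W(1)=\sum_{j=1}^n\alpha_j. \]
   Context: A channel is a row-stochastic matrix; $\mathcal{D}$ is the set of deterministic (0-1) channels from $\{1,\dots,m\}$ to $\{1,\dots,n\}$, $\mathrm{rank}(D)$ the matrix rank. $\Lambda(W)=\{\lambda\text{ probability distribution on }\mathcal{D}: W=\sum_D\lambda_DD\}$. $P_\lambda(r)=\lambda(\{D:\mathrm{rank}(D)=r\})$, $\underline{P}_W(r)=\min_{\lambda\in\Lambda(W)}P_\lambda(r)$, $\overline{P}_W(r)=\max_{\lambda\in\Lambda(W)}P_\lambda(r)$. $\mathbf{1}$ is the all-one row vector of length $m$ ($\mathbf{1}W$ = column sums), and $(x)_+=\max(x,0)$. *)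

theory Defs
  imports "HOL-Analysis.Analysis"
begin

text \<open>Channels from {1..m} to {1..n} are m x n real matrices (rows indexed by type 'm,
  columns by type 'n), row-stochastic.\<close>

definition channel :: "real^'n^'m \<Rightarrow> bool" where
  "channel W \<longleftrightarrow> (\<forall>i j. W $ i $ j \<ge> 0) \<and> (\<forall>i. (\<Sum>j\<in>UNIV. W $ i $ j) = 1)"

definition det_channels :: "(real^'n^'m) set" where
  "det_channels = {D. channel D \<and> (\<forall>i j. D $ i $ j = 0 \<or> D $ i $ j = 1)}"

definition Lambda :: "real^'n^'m \<Rightarrow> ((real^'n^'m) \<Rightarrow> real) set" where
  "Lambda W = {lam. (\<forall>D. 0 \<le> lam D) \<and> (\<forall>D. D \<notin> det_channels \<longrightarrow> lam D = 0)
      \<and> (\<Sum>D\<in>det_channels. lam D) = 1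
      \<and> W = (\<Sum>D\<in>det_channels. lam D *\<^sub>R D)}"

definition P_lam :: "((real^'n^'m) \<Rightarrow> real) \<Rightarrow> nat \<Rightarrow> real" where
  "P_lam lam r = (\<Sum>D\<in>{D\<in>det_channels. rank D = r}. lam D)"

text \<open>The set of values of P_lambda(r) over lambda in Lambda(W); the lower (upper) quantity
  is its minimum (maximum).\<close>
definition P_values :: "real^'n^'m \<Rightarrow> nat \<Rightarrow> real set" where
  "P_values W r = (\<lambda>lam. P_lam lam r) ` Lambda W"

definition is_min :: "real set \<Rightarrow> real \<Rightarrow> bool" where
  "is_min S v \<longleftrightarrow> v \<in> S \<and> (\<forall>x\<in>S. v \<le> x)"

definition is_max :: "real set \<Rightarrow> real \<Rightarrow> bool" where
  "is_max S v \<longleftrightarrow> v \<in> S \<and> (\<forall>x\<in>S. x \<le> v)"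

end

theory Submission
  imports Defs
begin

definition ind :: "('m \<Rightarrow> 'n) \<Rightarrow> 'm \<Rightarrow> 'n \<Rightarrow> real" where
  "ind f i j = (if f i = j then 1 else 0)"

lemma peel:
  fixes P :: "('m::finite \<Rightarrow> 'n::finite \<Rightarrow> real) \<Rightarrow> real \<Rightarrow> bool"
    and F :: "('m \<Rightarrow> 'n) set" and meas :: "('m \<Rightarrow> 'n \<Rightarrow> real) \<Rightarrow> real \<Rightarrow> nat"
  assumes base: "\<And>W s. P W s \<Longrightarrow> (\<forall>i j. W i j \<ge> 0) \<and> (\<forall>i. (\<Sum>j\<in>UNIV. W i j) = s)"
    and step: "\<And>W s. P W s \<Longrightarrow> s > 0 \<Longrightarrow> \<exists>f\<in>F. \<exists>t>0.
        P (\<lambda>i j. W i j - t * ind f i j) (s - t) \<and> meas (\<lambda>i j. W i j - t * ind f i j) (s - t) < meas W s"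
  shows "P W s \<Longrightarrow> \<exists>\<mu>. (\<forall>f. \<mu> f \<ge> 0) \<and> (\<forall>f. f \<notin> F \<longrightarrow> \<mu> f = 0)
            \<and> (\<forall>i j. W i j = (\<Sum>f\<in>{f. f i = j}. \<mu> f))"
proof (induction "meas W s" arbitrary: W s rule: less_induct)
  case less
  show ?case
  proof (cases "s > 0")
    case True
    from step[OF less.prems True] obtain f t where f: "f \<in> F" and t: "t > 0"
      and P': "P (\<lambda>i j. W i j - t * ind f i j) (s - t)"
      and m': "meas (\<lambda>i j. W i j - t * ind f i j) (s - t) < meas W s" by blast
    from less.hyps[OF m' P'] obtain \<mu> where mu: "\<forall>f. \<mu> f \<ge> 0" "\<forall>f. f \<notin> F \<longrightarrow> \<mu> f = 0"
      "\<forall>i j. W i j - t * ind f i j = (\<Sum>f\<in>{f. f i = j}. \<mu> f)" by blast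
    define \<nu> where "\<nu> = (\<lambda>g. \<mu> g + (if g = f then t else 0))"
    have "\<forall>i j. W i j = (\<Sum>g\<in>{g. g i = j}. \<nu> g)"
    proof (intro allI)
      fix i j
      have "(\<Sum>g\<in>{g. g i = j}. \<nu> g) = (\<Sum>g\<in>{g. g i = j}. \<mu> g) + (\<Sum>g\<in>{g. g i = j}. (if g = f then t else 0))"
        unfolding \<nu>_def by (simp add: sum.distrib)
      also have "(\<Sum>g\<in>{g. g i = j}. (if g = f then t else 0)) = t * ind f i j"
        by (simp add: ind_def)
      finally show "W i j = (\<Sum>g\<in>{g. g i = j}. \<nu> g)" using mu(3)[rule_format, of i j] by linarith
    qed
    moreover have "\<forall>g. \<nu> g \<ge> 0" using mu(1) t unfolding \<nu>_def by simp
    moreover have "\<forall>g. g \<notin> F \<longrightarrow> \<nu> g = 0" using mu(2) f unfolding \<nu>_def by auto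
    ultimately show ?thesis by blast
  next
    case False
    from base[OF less.prems] have nn: "\<forall>i j. W i j \<ge> 0" and rs: "\<forall>i. (\<Sum>j\<in>UNIV. W i j) = s" by auto
    have "\<forall>i j. W i j = 0"
    proof (intro allI)
      fix i j
      have "(\<Sum>j\<in>UNIV. W i j) \<ge> 0" using nn by (simp add: sum_nonneg)
      hence "(\<Sum>j\<in>UNIV. W i j) = 0" using rs False by smt
      thus "W i j = 0" using nn by (simp add: sum_nonneg_eq_0_iff)
    qed
    thus ?thesis by (intro exI[of _ "\<lambda>_. 0"]) simp
  qed
qed

lemma ind_rowsum: "(\<Sum>j\<in>(UNIV::'n::finite set). ind f i j) = (1::real)"
  by (simp add: ind_def)

lemma rowsum_sub:
  fixes W :: "'m \<Rightarrow> 'n::finite \<Rightarrow> real"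
  assumes "(\<Sum>j\<in>UNIV. W i j) = s"
  shows "(\<Sum>j\<in>UNIV. W i j - t * ind f i j) = s - t"
  using assms by (simp add: sum_subtractf sum_distrib_left[symmetric] ind_rowsum)

lemma decomp_any:
  fixes W :: "'m::finite \<Rightarrow> 'n::finite \<Rightarrow> real"
  assumes "\<forall>i j. W i j \<ge> 0" "\<forall>i. (\<Sum>j\<in>UNIV. W i j) = s"
  shows "\<exists>\<mu>. (\<forall>f. \<mu> f \<ge> 0) \<and> (\<forall>i j. W i j = (\<Sum>f\<in>{f. f i = j}. \<mu> f))"
proof -
  define P where "P = (\<lambda>(W::'m \<Rightarrow> 'n \<Rightarrow> real) s. (\<forall>i j. W i j \<ge> 0) \<and> (\<forall>i. (\<Sum>j\<in>UNIV. W i j) = s))"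
  define meas where "meas = (\<lambda>(W::'m \<Rightarrow> 'n \<Rightarrow> real) (s::real). card {p. W (fst p) (snd p) \<noteq> 0})"
  have "\<exists>\<mu>. (\<forall>f. \<mu> f \<ge> 0) \<and> (\<forall>f. f \<notin> UNIV \<longrightarrow> \<mu> f = 0)
            \<and> (\<forall>i j. W i j = (\<Sum>f\<in>{f. f i = j}. \<mu> f))"
  proof (rule peel[of P])
    show "P W s" using assms unfolding P_def by auto
  next
    fix W s assume "P W s" thus "(\<forall>i j. W i j \<ge> 0) \<and> (\<forall>i. (\<Sum>j\<in>UNIV. W i j) = s)"
      unfolding P_def by auto
  next
    fix W :: "'m \<Rightarrow> 'n \<Rightarrow> real" and s :: real assume PW: "P W s" and s: "s > 0"
    hence nn: "\<forall>i j. W i j \<ge> 0" and rs: "\<forall>i. (\<Sum>j\<in>UNIV. W i j) = s" unfolding P_def by auto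
    have ex: "\<forall>i. \<exists>j. W i j > 0"
    proof
      fix i show "\<exists>j. W i j > 0"
      proof (rule ccontr)
        assume "\<not> ?thesis" hence "\<forall>j. W i j = 0" using nn by (metis antisym not_less)
        hence "(\<Sum>j\<in>UNIV. W i j) = 0" by simp
        thus False using rs s by simp
      qed
    qed
    define f where "f = (\<lambda>i. SOME j. W i j > 0)"
    have fpos: "\<forall>i. W i (f i) > 0" unfolding f_def using ex by (meson someI_ex)
    define t where "t = Min (range (\<lambda>i. W i (f i)))"
    have tpos: "t > 0" unfolding t_def using fpos by (simp add: Min_gr_iff)
    have tle: "\<forall>i. t \<le> W i (f i)" unfolding t_def by simp
    have "t \<in> range (\<lambda>i. W i (f i))" unfolding t_def by (rule Min_in) auto
    then obtain i0 where i0: "t = W i0 (f i0)" by auto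
    define W' where "W' = (\<lambda>i j. W i j - t * ind f i j)"
    have nn': "\<forall>i j. W' i j \<ge> 0" unfolding W'_def ind_def using nn tle by auto
    have "\<forall>i. (\<Sum>j\<in>UNIV. W' i j) = s - t" unfolding W'_def
      by (intro allI rowsum_sub) (use rs in blast)
    hence "P W' (s - t)" unfolding P_def using nn' by simp
    moreover have "meas W' (s - t) < meas W s"
    proof -
      have "{p. W' (fst p) (snd p) \<noteq> 0} \<subset> {p. W (fst p) (snd p) \<noteq> 0}"
      proof
        show "{p. W' (fst p) (snd p) \<noteq> 0} \<subseteq> {p. W (fst p) (snd p) \<noteq> 0}"
          unfolding W'_def ind_def using fpos by (auto simp: less_le)
        have "(i0, f i0) \<notin> {p. W' (fst p) (snd p) \<noteq> 0}" unfolding W'_def ind_def using i0 by simp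
        moreover have "(i0, f i0) \<in> {p. W (fst p) (snd p) \<noteq> 0}" using fpos by (simp add: less_imp_neq[symmetric])
        ultimately show "{p. W' (fst p) (snd p) \<noteq> 0} \<noteq> {p. W (fst p) (snd p) \<noteq> 0}" by blast
      qed
      thus ?thesis unfolding meas_def by (simp add: psubset_card_mono)
    qed
    ultimately show "\<exists>f\<in>UNIV. \<exists>t>0. P (\<lambda>i j. W i j - t * ind f i j) (s - t) \<and>
        meas (\<lambda>i j. W i j - t * ind f i j) (s - t) < meas W s"
      using tpos unfolding W'_def by blast
  qed
  thus ?thesis by blast
qed

lemma ind_colsum: "(\<Sum>i\<in>(UNIV::'m::finite set). ind f i j) = real (card {i. f i = j})"
  unfolding ind_def by (simp add: sum.If_cases)

lemma colsum_total:
  fixes W :: "'m::finite \<Rightarrow> 'n::finite \<Rightarrow> real"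
  assumes rs: "\<forall>i. (\<Sum>j\<in>UNIV. W i j) = s"
  shows "(\<Sum>j\<in>UNIV. \<Sum>i\<in>UNIV. W i j) = real CARD('m) * s"
  using rs by (subst sum.swap) simp

lemma exists_other:
  fixes W :: "'m \<Rightarrow> 'n::finite \<Rightarrow> real"
  assumes nn: "\<forall>i j. W i j \<ge> 0" and rs: "(\<Sum>j\<in>UNIV. W i j) = s" and lt: "W i j0 < s"
  shows "\<exists>j1. j1 \<noteq> j0 \<and> W i j1 > 0"
proof (rule ccontr)
  assume "\<not> ?thesis"
  hence z: "\<forall>j\<in>UNIV - {j0}. W i j = 0" using nn by (metis antisym not_less DiffE singletonI)
  have "(\<Sum>j\<in>UNIV. W i j) = W i j0 + (\<Sum>j\<in>UNIV - {j0}. W i j)"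
    by (simp add: sum.remove)
  also have "(\<Sum>j\<in>UNIV - {j0}. W i j) = 0" using z by simp
  finally show False using rs lt by simp
qed

lemma entry_le:
  fixes W :: "'m \<Rightarrow> 'n::finite \<Rightarrow> real"
  assumes nn: "\<forall>i j. W i j \<ge> 0" and rs: "(\<Sum>j\<in>UNIV. W i j) = s"
  shows "W i j \<le> s"
proof -
  have "W i j \<le> (\<Sum>j\<in>UNIV. W i j)" by (rule member_le_sum) (use nn in auto)
  thus ?thesis using rs by simp
qed

lemma sum_pair_le:
  fixes d :: "'a::finite \<Rightarrow> real"
  assumes "\<forall>i. d i \<ge> 0" "a \<noteq> b"
  shows "d a + d b \<le> (\<Sum>i\<in>UNIV. d i)"
proof -
  have "(\<Sum>i\<in>{a,b}. d i) \<le> (\<Sum>i\<in>UNIV. d i)" by (rule sum_mono2) (use assms in auto)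
  thus ?thesis using assms by simp
qed

lemma sum_triple_le:
  fixes d :: "'a::finite \<Rightarrow> real"
  assumes "\<forall>i. d i \<ge> 0" "a \<noteq> b" "a \<noteq> c" "b \<noteq> c"
  shows "d a + d b + d c \<le> (\<Sum>i\<in>UNIV. d i)"
proof -
  have "(\<Sum>i\<in>{a,b,c}. d i) \<le> (\<Sum>i\<in>UNIV. d i)" by (rule sum_mono2) (use assms in auto)
  thus ?thesis using assms by simp
qed

lemma choose_f:
  fixes W :: "'m::finite \<Rightarrow> 'n::finite \<Rightarrow> real"
  assumes m2: "CARD('m) \<ge> 2" and nn: "\<forall>i j. W i j \<ge> 0" and rs: "\<forall>i. (\<Sum>j\<in>UNIV. W i j) = s"
    and cs: "\<forall>j. (\<Sum>i\<in>UNIV. W i j) \<le> (real CARD('m) - 1) * s" and s: "s > 0"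
  shows "\<exists>f. \<not> (\<exists>j. f = (\<lambda>_. j)) \<and> (\<forall>i. W i (f i) > 0)
     \<and> (\<forall>j. (\<Sum>i\<in>UNIV. W i j) = (real CARD('m) - 1) * s \<longrightarrow> real (card {i. f i = j}) = real CARD('m) - 1)"
proof -
  define K where "K = real CARD('m) - 1"
  have m2r: "real CARD('m) \<ge> 2" using m2 by simp
  have low: "\<exists>i1. W i1 j0 < s" for j0
  proof (rule ccontr)
    assume "\<not> ?thesis" hence "\<forall>i. s \<le> W i j0" by (simp add: not_less)
    hence "(\<Sum>i\<in>(UNIV::'m set). s) \<le> (\<Sum>i\<in>UNIV. W i j0)" by (intro sum_mono) auto
    hence "real CARD('m) * s \<le> (real CARD('m) - 1) * s" using cs by (simp add: order_trans)
    thus False using s by (simp add: algebra_simps)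
  qed
  have nc: "\<not> (\<exists>j. f = (\<lambda>_. j))" if "f i1 \<noteq> f i2" for f :: "'m \<Rightarrow> 'n" and i1 i2
    using that by auto
  have other: "\<exists>i2::'m. i2 \<noteq> i1" for i1 :: 'm
  proof (rule ccontr)
    assume "\<not> ?thesis" hence "UNIV = {i1}" by auto
    hence "card (UNIV::'m set) = card {i1}" by (rule arg_cong)
    hence "CARD('m) = 1" by simp
    thus False using m2 by simp
  qed
  show ?thesis
  proof (cases "\<exists>j0. (\<Sum>i\<in>UNIV. W i j0) = K * s")
    case False
    note notight = False
    have ex: "\<forall>i. \<exists>j. W i j > 0"
    proof
      fix i show "\<exists>j. W i j > 0"
      proof (rule ccontr)
        assume "\<not> ?thesis" hence "\<forall>j. W i j = 0" using nn by (metis antisym not_less)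
        hence "(\<Sum>j\<in>UNIV. W i j) = 0" by simp
        thus False using rs s by simp
      qed
    qed
    define g where "g = (\<lambda>i. SOME j. W i j > 0)"
    have gpos: "\<forall>i. W i (g i) > 0" unfolding g_def using ex by (meson someI_ex)
    show ?thesis
    proof (cases "\<exists>j. g = (\<lambda>_. j)")
      case False thus ?thesis using gpos notight unfolding K_def by blast
    next
      case True
      then obtain j0 where j0: "g = (\<lambda>_. j0)" by blast
      obtain i1 where i1: "W i1 j0 < s" using low by blast
      obtain j1 where j1: "j1 \<noteq> j0" "W i1 j1 > 0" using exists_other[OF nn rs[rule_format] i1] by blast
      obtain i2 where i2: "i2 \<noteq> i1" using other by blast
      define f where "f = g(i1 := j1)"
      have "f i1 \<noteq> f i2" unfolding f_def using i2 j0 j1 by auto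
      hence "\<not> (\<exists>j. f = (\<lambda>_. j))" by (rule nc)
      moreover have "\<forall>i. W i (f i) > 0" unfolding f_def using gpos j1 by auto
      ultimately show ?thesis using notight unfolding K_def by blast
    qed
  next
    case True
    then obtain j0 where j0: "(\<Sum>i\<in>UNIV. W i j0) = K * s" by blast
    define d where "d = (\<lambda>i. s - W i j0)"
    have dnn: "\<forall>i. d i \<ge> 0" unfolding d_def using entry_le[OF nn] rs by (simp add: le_diff_eq)
    have dsum: "(\<Sum>i\<in>UNIV. d i) = s" unfolding d_def K_def using j0
      by (simp add: sum_subtractf K_def algebra_simps)
    obtain i1 where i1: "W i1 j0 < s" using low by blast
    have pos0: "\<forall>i. i \<noteq> i1 \<longrightarrow> W i j0 > 0"
    proof (intro allI impI, rule ccontr)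
      fix i assume ne: "i \<noteq> i1" and "\<not> W i j0 > 0"
      hence "W i j0 = 0" using nn by (metis antisym not_less)
      hence "d i = s" unfolding d_def by simp
      moreover have "d i1 > 0" unfolding d_def using i1 by simp
      moreover have "d i1 + d i \<le> s" using sum_pair_le[OF dnn ne[symmetric]] dsum by simp
      ultimately show False by simp
    qed
    obtain j1 where j1: "j1 \<noteq> j0" "W i1 j1 > 0" using exists_other[OF nn rs[rule_format] i1] by blast
    obtain i2 where i2: "i2 \<noteq> i1" using other by blast
    define f where "f = (\<lambda>_. j0)(i1 := j1)"
    have "f i1 \<noteq> f i2" unfolding f_def using i2 j1 by auto
    hence "\<not> (\<exists>j. f = (\<lambda>_. j))" by (rule nc)
    moreover have "\<forall>i. W i (f i) > 0" unfolding f_def using pos0 j1 by auto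
    moreover have "\<forall>j. (\<Sum>i\<in>UNIV. W i j) = K * s \<longrightarrow> real (card {i. f i = j}) = K"
    proof (intro allI impI)
      fix j assume tj: "(\<Sum>i\<in>UNIV. W i j) = K * s"
      show "real (card {i. f i = j}) = K"
      proof (cases "j = j0")
        case True
        have "{i. f i = j} = UNIV - {i1}" unfolding f_def using True j1 by auto
        hence "card {i. f i = j} = CARD('m) - 1" by (simp add: card_Diff_singleton)
        thus ?thesis unfolding K_def using m2 by (simp add: of_nat_diff)
      next
        case False
        define c where "c = (\<lambda>j. (\<Sum>i\<in>UNIV. W i j))"
        have cnn: "\<forall>j. c j \<ge> 0" unfolding c_def using nn by (simp add: sum_nonneg)
        have ctot: "(\<Sum>j\<in>UNIV. c j) = real CARD('m) * s" unfolding c_def by (rule colsum_total[OF rs])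
        have "c j0 + c j \<le> real CARD('m) * s" using sum_pair_le[OF cnn False[symmetric]] ctot by simp
        hence "2 * K * s \<le> real CARD('m) * s" using tj j0 unfolding c_def by simp
        hence "2 * K \<le> real CARD('m)" using s by simp
        hence m2': "CARD('m) = 2" unfolding K_def using m2 by simp
        have jj1: "j1 = j"
        proof (rule ccontr)
          assume "j1 \<noteq> j"
          have "c j0 + c j + c j1 \<le> real CARD('m) * s"
            using sum_triple_le[OF cnn False[symmetric] j1(1)[symmetric] \<open>j1 \<noteq> j\<close>[symmetric]] ctot by simp
          moreover have "c j1 \<ge> W i1 j1" unfolding c_def by (rule member_le_sum) (use nn in auto)
          ultimately show False using tj j0 j1(2) m2' unfolding c_def K_def by simp
        qed
        have "{i. f i = j} = {i1}" unfolding f_def using jj1 False by auto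
        thus ?thesis unfolding K_def using m2' by simp
      qed
    qed
    ultimately show ?thesis unfolding K_def by blast
  qed
qed

lemma decomp_nc:
  fixes W :: "'m::finite \<Rightarrow> 'n::finite \<Rightarrow> real"
  assumes m2: "CARD('m) \<ge> 2" and nn: "\<forall>i j. W i j \<ge> 0" and rs: "\<forall>i. (\<Sum>j\<in>UNIV. W i j) = s"
    and cs: "\<forall>j. (\<Sum>i\<in>UNIV. W i j) \<le> (real CARD('m) - 1) * s"
  shows "\<exists>\<mu>. (\<forall>f. \<mu> f \<ge> 0) \<and> (\<forall>f. (\<exists>j. f = (\<lambda>_. j)) \<longrightarrow> \<mu> f = 0)
            \<and> (\<forall>i j. W i j = (\<Sum>f\<in>{f. f i = j}. \<mu> f))"
proof -
  define K where "K = real CARD('m) - 1"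
  define F where "F = {f::'m \<Rightarrow> 'n. \<not> (\<exists>j. f = (\<lambda>_. j))}"
  define P where "P = (\<lambda>(W::'m \<Rightarrow> 'n \<Rightarrow> real) s. (\<forall>i j. W i j \<ge> 0) \<and> (\<forall>i. (\<Sum>j\<in>UNIV. W i j) = s)
      \<and> (\<forall>j. (\<Sum>i\<in>UNIV. W i j) \<le> K * s))"
  define meas where "meas = (\<lambda>(W::'m \<Rightarrow> 'n \<Rightarrow> real) (s::real). card {p. W (fst p) (snd p) \<noteq> 0}
      + card {j. (\<Sum>i\<in>UNIV. W i j) < K * s})"
  have "\<exists>\<mu>. (\<forall>f. \<mu> f \<ge> 0) \<and> (\<forall>f. f \<notin> F \<longrightarrow> \<mu> f = 0)
            \<and> (\<forall>i j. W i j = (\<Sum>f\<in>{f. f i = j}. \<mu> f))"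
  proof (rule peel[of P])
    show "P W s" using assms unfolding P_def K_def by auto
  next
    fix W s assume "P W s" thus "(\<forall>i j. W i j \<ge> 0) \<and> (\<forall>i. (\<Sum>j\<in>UNIV. W i j) = s)"
      unfolding P_def by auto
  next
    fix W :: "'m \<Rightarrow> 'n \<Rightarrow> real" and s :: real assume PW: "P W s" and s: "s > 0"
    hence nn: "\<forall>i j. W i j \<ge> 0" and rs: "\<forall>i. (\<Sum>j\<in>UNIV. W i j) = s"
      and cs: "\<forall>j. (\<Sum>i\<in>UNIV. W i j) \<le> K * s" unfolding P_def by auto
    obtain f where fF: "\<not> (\<exists>j. f = (\<lambda>_. j))" and fpos: "\<forall>i. W i (f i) > 0"
      and ftight: "\<forall>j. (\<Sum>i\<in>UNIV. W i j) = K * s \<longrightarrow> real (card {i. f i = j}) = K"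
      using choose_f[OF m2 nn rs cs[unfolded K_def] s] unfolding K_def by blast
    define k where "k = (\<lambda>j. real (card {i. f i = j}))"
    define c where "c = (\<lambda>j. (\<Sum>i\<in>UNIV. W i j))"
    have kle: "k j \<le> K" for j
    proof -
      have "{i. f i = j} \<noteq> UNIV" using fF by auto
      hence "{i. f i = j} \<subset> UNIV" by auto
      hence "card {i. f i = j} < CARD('m)" by (simp add: psubset_card_mono)
      thus ?thesis unfolding k_def K_def by linarith
    qed
    define A where "A = range (\<lambda>i. W i (f i))"
    define J where "J = {j. k j < K}"
    define B where "B = (\<lambda>j. (K * s - c j) / (K - k j)) ` J"
    have Bpos: "\<forall>b\<in>B. b > 0"
    proof
      fix b assume "b \<in> B"
      then obtain j where j: "j \<in> J" "b = (K * s - c j) / (K - k j)" unfolding B_def by auto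
      have "c j \<noteq> K * s" using ftight j(1) unfolding J_def c_def k_def by auto
      hence "c j < K * s" using cs unfolding c_def by (simp add: less_le)
      thus "b > 0" using j unfolding J_def by simp
    qed
    define t where "t = Min (A \<union> B)"
    have finAB: "finite (A \<union> B)" unfolding A_def B_def by simp
    have neAB: "A \<union> B \<noteq> {}" unfolding A_def by simp
    have tpos: "t > 0" unfolding t_def using finAB neAB Bpos fpos unfolding A_def
      by (auto simp: Min_gr_iff)
    have tA: "\<forall>i. t \<le> W i (f i)" unfolding t_def A_def using finAB by simp
    have tB: "\<forall>j\<in>J. t \<le> (K * s - c j) / (K - k j)" unfolding t_def B_def using finAB by simp
    have tin: "t \<in> A \<union> B" unfolding t_def using finAB neAB by (rule Min_in)
    define W' where "W' = (\<lambda>i j. W i j - t * ind f i j)"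
    have nn': "\<forall>i j. W' i j \<ge> 0" unfolding W'_def ind_def using nn tA by auto
    have rs': "\<forall>i. (\<Sum>j\<in>UNIV. W' i j) = s - t" unfolding W'_def
      by (intro allI rowsum_sub) (use rs in blast)
    have c': "(\<Sum>i\<in>UNIV. W' i j) = c j - t * k j" for j
      unfolding W'_def c_def k_def by (simp add: sum_subtractf sum_distrib_left[symmetric] ind_colsum)
    have cs': "\<forall>j. (\<Sum>i\<in>UNIV. W' i j) \<le> K * (s - t)"
    proof
      fix j
      show "(\<Sum>i\<in>UNIV. W' i j) \<le> K * (s - t)"
      proof (cases "k j = K")
        case True
        have "(\<Sum>i\<in>UNIV. W' i j) = c j - t * K" using c'[of j] True by simp
        thus ?thesis using cs unfolding c_def by (simp add: algebra_simps)
      next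
        case False
        hence "j \<in> J" "K - k j > 0" using kle[of j] unfolding J_def by auto
        hence jJ: "j \<in> J" and kp: "K - k j > 0" by auto
        have "t \<le> (K * s - c j) / (K - k j)" using tB jJ by blast
        hence "t * (K - k j) \<le> K * s - c j" using kp by (simp add: le_divide_eq)
        thus ?thesis using c'[of j] by (simp add: algebra_simps)
      qed
    qed
    have tight_keep: "c j = K * s \<Longrightarrow> (\<Sum>i\<in>UNIV. W' i j) = K * (s - t)" for j
    proof -
      assume cj: "c j = K * s"
      hence "k j = K" using ftight unfolding c_def k_def by simp
      thus ?thesis using c'[of j] cj by (simp add: algebra_simps)
    qed
    have "P W' (s - t)" unfolding P_def using nn' rs' cs' by simp
    moreover have "meas W' (s - t) < meas W s"
    proof -
      define N where "N = {p. W (fst p) (snd p) \<noteq> 0}"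
      define N' where "N' = {p. W' (fst p) (snd p) \<noteq> 0}"
      define T where "T = {j. (\<Sum>i\<in>UNIV. W i j) < K * s}"
      define T' where "T' = {j. (\<Sum>i\<in>UNIV. W' i j) < K * (s - t)}"
      have NN: "N' \<subseteq> N" unfolding N_def N'_def W'_def ind_def using fpos by (auto simp: less_le)
      have TT: "T' \<subseteq> T"
      proof
        fix j assume "j \<in> T'"
        hence "(\<Sum>i\<in>UNIV. W' i j) < K * (s - t)" unfolding T'_def by simp
        hence "c j \<noteq> K * s" using tight_keep by auto
        thus "j \<in> T" unfolding T_def using cs unfolding c_def by (simp add: less_le)
      qed
      have "N' \<subset> N \<or> T' \<subset> T"
      proof (cases "t \<in> A")
        case True
        then obtain i0 where i0: "t = W i0 (f i0)" unfolding A_def by auto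
        have "(i0, f i0) \<notin> N'" unfolding N'_def W'_def ind_def using i0 by simp
        moreover have "(i0, f i0) \<in> N" unfolding N_def using fpos by (simp add: less_imp_neq[symmetric])
        ultimately show ?thesis using NN by blast
      next
        case False
        hence "t \<in> B" using tin by auto
        then obtain j0 where j0: "j0 \<in> J" "t = (K * s - c j0) / (K - k j0)" unfolding B_def by auto
        have pos: "K - k j0 > 0" using j0(1) unfolding J_def by simp
        have "t * (K - k j0) = K * s - c j0" using j0(2) pos by simp
        hence "(\<Sum>i\<in>UNIV. W' i j0) = K * (s - t)" using c'[of j0] by (simp add: algebra_simps)
        hence "j0 \<notin> T'" unfolding T'_def by simp
        moreover have "c j0 \<noteq> K * s" using ftight j0(1) unfolding J_def c_def k_def by auto
        hence "j0 \<in> T" unfolding T_def using cs unfolding c_def by (simp add: less_le)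
        ultimately show ?thesis using TT by blast
      qed
      hence "card N' + card T' < card N + card T"
        using NN TT card_mono[of N N'] card_mono[of T T'] psubset_card_mono[of N N'] psubset_card_mono[of T T']
        by fastforce
      thus ?thesis unfolding meas_def N_def N'_def T_def T'_def by simp
    qed
    ultimately show "\<exists>f\<in>F. \<exists>t>0. P (\<lambda>i j. W i j - t * ind f i j) (s - t) \<and>
        meas (\<lambda>i j. W i j - t * ind f i j) (s - t) < meas W s"
      using tpos fF unfolding W'_def F_def by blast
  qed
  thus ?thesis unfolding F_def by blast
qed

definition Dm :: "('m::finite \<Rightarrow> 'n::finite) \<Rightarrow> real^'n^'m" where
  "Dm f = (\<chi> i j. ind f i j)"

lemma Dm_nth [simp]: "Dm f $ i $ j = ind f i j"
  unfolding Dm_def by simp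

lemma inj_Dm: "inj Dm"
proof (rule injI)
  fix f g :: "'m::finite \<Rightarrow> 'n::finite" assume "Dm f = Dm g"
  hence "\<forall>i. Dm f $ i $ (f i) = Dm g $ i $ (f i)" by simp
  thus "f = g" by (auto simp: ind_def fun_eq_iff split: if_splits)
qed

lemma det_channels_eq: "(det_channels :: (real^'n::finite^'m::finite) set) = range Dm"
proof
  show "range Dm \<subseteq> (det_channels :: (real^'n^'m) set)"
    unfolding det_channels_def channel_def by (auto simp: ind_def ind_rowsum[unfolded ind_def])
next
  show "(det_channels :: (real^'n^'m) set) \<subseteq> range Dm"
  proof
    fix D :: "real^'n^'m" assume "D \<in> det_channels"
    hence nn: "\<forall>i j. D $ i $ j \<ge> 0" and rs: "\<forall>i. (\<Sum>j\<in>UNIV. D $ i $ j) = 1"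
      and zo: "\<forall>i j. D $ i $ j = 0 \<or> D $ i $ j = 1"
      unfolding det_channels_def channel_def by auto
    have ex: "\<exists>j. D $ i $ j = 1" for i
    proof (rule ccontr)
      assume "\<not> ?thesis" hence "\<forall>j. D $ i $ j = 0" using zo by blast
      thus False using rs[rule_format, of i] by simp
    qed
    define f where "f = (\<lambda>i. SOME j. D $ i $ j = 1)"
    have f1: "D $ i $ (f i) = 1" for i unfolding f_def using ex by (meson someI_ex)
    have "D $ i $ j = ind f i j" for i j
    proof (cases "f i = j")
      case True thus ?thesis using f1 by (auto simp: ind_def)
    next
      case False
      have "D $ i $ (f i) + D $ i $ j \<le> 1"
        using sum_pair_le[of "\<lambda>j. D $ i $ j", OF _ False] nn rs by auto
      hence "D $ i $ j = 0" using f1 zo by force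
      thus ?thesis using False by (simp add: ind_def)
    qed
    hence "D = Dm f" by (simp add: vec_eq_iff)
    thus "D \<in> range Dm" by blast
  qed
qed

lemma row_Dm: "row i (Dm f) = axis (f i) 1"
  by (simp add: row_def axis_def vec_eq_iff ind_def)

lemma rank_Dm:
  fixes f :: "'m::finite \<Rightarrow> 'n::finite"
  shows "rank (Dm f) = 1 \<longleftrightarrow> (\<exists>j. f = (\<lambda>_. j))"
proof
  assume "rank (Dm f) = 1"
  show "\<exists>j. f = (\<lambda>_. j)"
  proof (rule ccontr)
    assume "\<not> ?thesis"
    hence "f \<noteq> (\<lambda>_. f undefined)" by blast
    then obtain b where ab0: "f b \<noteq> f undefined" by (auto simp: fun_eq_iff)
    define a where "a = (undefined::'m)"
    have ab: "f a \<noteq> f b" using ab0 unfolding a_def by simp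
    let ?B = "{axis (f a) (1::real), axis (f b) 1}"
    have sub: "?B \<subseteq> rows (Dm f)" unfolding rows_def
    proof -
      have "axis (f a) 1 \<in> {row i (Dm f) |i. i \<in> UNIV}" using row_Dm[of a f, symmetric] by blast
      moreover have "axis (f b) 1 \<in> {row i (Dm f) |i. i \<in> UNIV}" using row_Dm[of b f, symmetric] by blast
      ultimately show "?B \<subseteq> {row i (Dm f) |i. i \<in> UNIV}" by blast
    qed
    have "?B \<subseteq> Basis" by simp
    hence ind: "independent ?B" using independent_Basis independent_mono by blast
    have "card ?B = 2" using ab by (simp add: axis_eq_axis)
    hence "2 \<le> dim (rows (Dm f))" using independent_card_le_dim[OF sub ind] by simp
    thus False using \<open>rank (Dm f) = 1\<close> by (simp add: row_rank_def)
  qed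
next
  assume "\<exists>j. f = (\<lambda>_. j)"
  then obtain j where j: "f = (\<lambda>_. j)" by blast
  have "rows (Dm f) = {axis j 1}" unfolding rows_def using row_Dm j by auto
  thus "rank (Dm f) = 1" by (simp add: row_rank_def axis_eq_axis)
qed

lemma sum_filter_ind:
  fixes \<mu> :: "('m::finite \<Rightarrow> 'n::finite) \<Rightarrow> real"
  shows "(\<Sum>f\<in>{f. f i = j}. \<mu> f) = (\<Sum>f\<in>UNIV. \<mu> f * ind f i j)"
proof -
  have "(\<Sum>f\<in>UNIV. \<mu> f * ind f i j) = (\<Sum>f\<in>UNIV. if f i = j then \<mu> f else 0)"
    by (rule sum.cong) (auto simp: ind_def)
  also have "\<dots> = (\<Sum>f\<in>{f \<in> UNIV. f i = j}. \<mu> f)" by (rule sum.inter_filter[symmetric]) simp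
  finally show ?thesis by simp
qed

lemma sum_det:
  fixes h :: "real^'n::finite^'m::finite \<Rightarrow> 'a::comm_monoid_add"
  shows "(\<Sum>D\<in>det_channels. h D) = (\<Sum>f\<in>UNIV. h (Dm f))"
  unfolding det_channels_eq by (simp add: sum.reindex[OF inj_Dm])

lemma rank1_det: "{D \<in> (det_channels :: (real^'n::finite^'m::finite) set). rank D = 1}
    = Dm ` {f. \<exists>j. f = (\<lambda>_. j)}"
  unfolding det_channels_eq using rank_Dm by auto

lemma sum_rank1:
  fixes h :: "real^'n::finite^'m::finite \<Rightarrow> real"
  shows "(\<Sum>D\<in>{D \<in> det_channels. rank D = 1}. h D) = (\<Sum>f\<in>{f::'m\<Rightarrow>'n. \<exists>j. f = (\<lambda>_. j)}. h (Dm f))"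
  unfolding rank1_det by (rule sum.reindex[unfolded comp_def]) (meson inj_Dm inj_on_subset subset_UNIV)

lemma Dm_sum_nth:
  fixes \<mu> :: "('m::finite \<Rightarrow> 'n::finite) \<Rightarrow> real"
  shows "(\<Sum>f\<in>UNIV. \<mu> f *\<^sub>R Dm f) $ i $ j = (\<Sum>f\<in>UNIV. \<mu> f * ind f i j)"
  by simp

lemma lam_to_mu:
  fixes W :: "real^'n::finite^'m::finite"
  assumes "lam \<in> Lambda W"
  shows "(\<forall>f. lam (Dm f) \<ge> 0) \<and> (\<Sum>f\<in>UNIV. lam (Dm f)) = 1
    \<and> (\<forall>i j. W $ i $ j = (\<Sum>f\<in>UNIV. lam (Dm f) * ind f i j))
    \<and> P_lam lam 1 = (\<Sum>f\<in>{f::'m\<Rightarrow>'n. \<exists>j. f = (\<lambda>_. j)}. lam (Dm f))"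
proof -
  have a: "\<forall>D. 0 \<le> lam D" "(\<Sum>D\<in>det_channels. lam D) = 1"
    "W = (\<Sum>D\<in>(det_channels :: (real^'n^'m) set). lam D *\<^sub>R D)"
    using assms unfolding Lambda_def by auto
  have "W = (\<Sum>f\<in>UNIV. lam (Dm f) *\<^sub>R Dm f)" using a(3) sum_det[of "\<lambda>D. lam D *\<^sub>R D"] by simp
  hence "\<forall>i j. W $ i $ j = (\<Sum>f\<in>UNIV. lam (Dm f) * ind f i j)" by simp
  moreover have "(\<Sum>f\<in>UNIV. lam (Dm f)) = 1" using a(2) sum_det[of lam] by simp
  moreover have "P_lam lam 1 = (\<Sum>f\<in>{f::'m\<Rightarrow>'n. \<exists>j. f = (\<lambda>_. j)}. lam (Dm f))"
    unfolding P_lam_def by (rule sum_rank1)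
  ultimately show ?thesis using a(1) by blast
qed

lemma mu_to_lam:
  fixes W :: "real^'n::finite^'m::finite"
  assumes ch: "channel W" and nn: "\<forall>f. \<mu> f \<ge> 0"
    and dec: "\<forall>i j. W $ i $ j = (\<Sum>f\<in>{f. f i = j}. \<mu> f)"
  shows "(\<Sum>f\<in>{f::'m\<Rightarrow>'n. \<exists>j. f = (\<lambda>_. j)}. \<mu> f) \<in> P_values W 1"
proof -
  define lam where "lam = (\<lambda>D::real^'n^'m. if D \<in> range Dm then \<mu> (inv Dm D) else 0)"
  have lD: "lam (Dm f) = \<mu> f" for f unfolding lam_def by (simp add: inv_f_f[OF inj_Dm])
  have dec': "W $ i $ j = (\<Sum>f\<in>UNIV. \<mu> f * ind f i j)" for i j using dec[rule_format, of i j] sum_filter_ind[of \<mu> i j] by simp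
  have "(\<Sum>f\<in>UNIV. \<mu> f) = 1"
  proof -
    fix i :: 'm
    have "(\<Sum>f\<in>UNIV. \<mu> f) = (\<Sum>f\<in>UNIV. \<mu> f * (\<Sum>j\<in>UNIV. ind f i j))" by (simp add: ind_rowsum)
    also have "\<dots> = (\<Sum>j\<in>UNIV. \<Sum>f\<in>UNIV. \<mu> f * ind f i j)"
      unfolding sum_distrib_left by (rule sum.swap)
    also have "\<dots> = (\<Sum>j\<in>UNIV. W $ i $ j)" using dec' by simp
    also have "\<dots> = 1" using ch unfolding channel_def by simp
    finally show ?thesis .
  qed
  hence s1: "(\<Sum>D\<in>det_channels. lam D) = 1" using sum_det[of lam] lD by simp
  have "W = (\<Sum>f\<in>UNIV. \<mu> f *\<^sub>R Dm f)" using dec' by (simp add: vec_eq_iff)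
  hence s2: "W = (\<Sum>D\<in>det_channels. lam D *\<^sub>R D)" using sum_det[of "\<lambda>D. lam D *\<^sub>R D"] lD by simp
  have s3: "\<forall>D. 0 \<le> lam D" unfolding lam_def using nn by simp
  have s4: "\<forall>D. D \<notin> det_channels \<longrightarrow> lam D = 0" unfolding lam_def det_channels_eq by simp
  have "lam \<in> Lambda W" unfolding Lambda_def using s1 s2 s3 s4 by blast
  moreover have "P_lam lam 1 = (\<Sum>f\<in>{f::'m\<Rightarrow>'n. \<exists>j. f = (\<lambda>_. j)}. \<mu> f)"
    unfolding P_lam_def sum_rank1 lD by simp
  ultimately show ?thesis unfolding P_values_def by force
qed

lemma const_sum:
  fixes h :: "('m::finite \<Rightarrow> 'n::finite) \<Rightarrow> real"
  shows "(\<Sum>f\<in>{f::'m\<Rightarrow>'n. \<exists>j. f = (\<lambda>_. j)}. h f) = (\<Sum>j\<in>UNIV. h (\<lambda>_. j))"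
proof -
  have e: "{f::'m\<Rightarrow>'n. \<exists>j. f = (\<lambda>_. j)} = range (\<lambda>j. \<lambda>_. j)" by auto
  have i: "inj (\<lambda>j::'n. \<lambda>_::'m. j)" by (rule injI) (metis)
  show ?thesis unfolding e by (simp add: sum.reindex[OF i])
qed

lemma card_nonconst:
  fixes f :: "'m::finite \<Rightarrow> 'n"
  assumes "\<not> (\<exists>j. f = (\<lambda>_. j))"
  shows "card {i. f i = j} < CARD('m)"
proof -
  have "{i. f i = j} \<noteq> UNIV" using assms by auto
  hence "{i. f i = j} \<subset> UNIV" by auto
  thus ?thesis by (simp add: psubset_card_mono)
qed

lemma lower_bound:
  fixes W :: "real^'n::finite^'m::finite"
  assumes "x \<in> P_values W 1"
  shows "max (Max (range (\<lambda>j. \<Sum>i\<in>UNIV. W $ i $ j)) - real CARD('m) + 1) 0 \<le> x"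
proof -
  obtain lam where lam: "lam \<in> Lambda W" and x: "x = P_lam lam 1"
    using assms unfolding P_values_def by auto
  define \<mu> where "\<mu> = (\<lambda>f. lam (Dm f))"
  define C where "C = {f::'m\<Rightarrow>'n. \<exists>j. f = (\<lambda>_. j)}"
  have nn: "\<forall>f. \<mu> f \<ge> 0" and s1: "(\<Sum>f\<in>UNIV. \<mu> f) = 1"
    and dec: "\<forall>i j. W $ i $ j = (\<Sum>f\<in>UNIV. \<mu> f * ind f i j)"
    and xe: "x = (\<Sum>f\<in>C. \<mu> f)"
    using lam_to_mu[OF lam] x unfolding \<mu>_def C_def by auto
  have x0: "x \<ge> 0" unfolding xe using nn by (simp add: sum_nonneg)
  have cb: "(\<Sum>i\<in>UNIV. W $ i $ j) \<le> real CARD('m) - 1 + x" for j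
  proof -
    have "(\<Sum>i\<in>UNIV. W $ i $ j) = (\<Sum>i\<in>UNIV. \<Sum>f\<in>UNIV. \<mu> f * ind f i j)" using dec by simp
    also have "\<dots> = (\<Sum>f\<in>UNIV. \<mu> f * (\<Sum>i\<in>UNIV. ind f i j))"
      unfolding sum_distrib_left by (rule sum.swap)
    also have "\<dots> = (\<Sum>f\<in>UNIV. \<mu> f * real (card {i. f i = j}))" by (simp add: ind_colsum)
    also have "\<dots> \<le> (\<Sum>f\<in>UNIV. \<mu> f * (real CARD('m) - 1) + (if f \<in> C then \<mu> f else 0))"
    proof (rule sum_mono)
      fix f :: "'m \<Rightarrow> 'n"
      show "\<mu> f * real (card {i. f i = j}) \<le> \<mu> f * (real CARD('m) - 1) + (if f \<in> C then \<mu> f else 0)"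
      proof (cases "f \<in> C")
        case True
        have "card {i. f i = j} \<le> CARD('m)" by (rule card_mono) auto
        hence "real (card {i. f i = j}) \<le> real CARD('m)" by simp
        hence "\<mu> f * real (card {i. f i = j}) \<le> \<mu> f * real CARD('m)"
          using nn by (simp add: mult_left_mono)
        thus ?thesis using True by (simp add: algebra_simps)
      next
        case False
        have "\<not> (\<exists>j. f = (\<lambda>_. j))" using False unfolding C_def by simp
        hence "card {i. f i = j} < CARD('m)" by (rule card_nonconst)
        hence "real (card {i. f i = j}) \<le> real CARD('m) - 1" by linarith
        hence "\<mu> f * real (card {i. f i = j}) \<le> \<mu> f * (real CARD('m) - 1)"
          using nn by (simp add: mult_left_mono)
        thus ?thesis using False by simp
      qed
    qed
    also have "\<dots> = (\<Sum>f\<in>UNIV. \<mu> f) * (real CARD('m) - 1) + (\<Sum>f\<in>UNIV. if f \<in> C then \<mu> f else 0)"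
      by (simp only: sum.distrib sum_distrib_right)
    also have "(\<Sum>f\<in>UNIV. if f \<in> C then \<mu> f else 0) = (\<Sum>f\<in>UNIV \<inter> C. \<mu> f)"
      by (rule sum.inter_restrict[symmetric]) simp
    also have "(\<Sum>f\<in>UNIV. \<mu> f) * (real CARD('m) - 1) + (\<Sum>f\<in>UNIV \<inter> C. \<mu> f) = (real CARD('m) - 1) + x"
      using s1 xe by simp
    finally show ?thesis .
  qed
  have "Max (range (\<lambda>j. \<Sum>i\<in>UNIV. W $ i $ j)) \<in> range (\<lambda>j. \<Sum>i\<in>UNIV. W $ i $ j)"
    by (rule Max_in) auto
  then obtain js where "Max (range (\<lambda>j. \<Sum>i\<in>UNIV. W $ i $ j)) = (\<Sum>i\<in>UNIV. W $ i $ js)"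
    by (elim rangeE) blast
  thus ?thesis using cb[of js] x0 by simp
qed

lemma upper_bound:
  fixes W :: "real^'n::finite^'m::finite"
  assumes "x \<in> P_values W 1"
  shows "x \<le> (\<Sum>j\<in>UNIV. Min (range (\<lambda>i. W $ i $ j)))"
proof -
  obtain lam where lam: "lam \<in> Lambda W" and x: "x = P_lam lam 1"
    using assms unfolding P_values_def by auto
  define \<mu> where "\<mu> = (\<lambda>f. lam (Dm f))"
  have nn: "\<forall>f. \<mu> f \<ge> 0"
    and dec: "\<forall>i j. W $ i $ j = (\<Sum>f\<in>UNIV. \<mu> f * ind f i j)"
    and xe: "x = (\<Sum>f\<in>{f::'m\<Rightarrow>'n. \<exists>j. f = (\<lambda>_. j)}. \<mu> f)"
    using lam_to_mu[OF lam] x unfolding \<mu>_def by auto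
  have "x = (\<Sum>j\<in>UNIV. \<mu> (\<lambda>_. j))" unfolding xe by (rule const_sum)
  also have "\<dots> \<le> (\<Sum>j\<in>UNIV. Min (range (\<lambda>i. W $ i $ j)))"
  proof (rule sum_mono)
    fix j :: 'n
    have "\<mu> (\<lambda>_. j) \<le> W $ i $ j" for i
    proof -
      have "W $ i $ j = (\<Sum>f\<in>{f. f i = j}. \<mu> f)" using dec[rule_format, of i j] sum_filter_ind[of \<mu> i j] by simp
      moreover have "\<mu> (\<lambda>_. j) \<le> (\<Sum>f\<in>{f. f i = j}. \<mu> f)"
        by (rule member_le_sum) (use nn in auto)
      ultimately show ?thesis by simp
    qed
    thus "\<mu> (\<lambda>_. j) \<le> Min (range (\<lambda>i. W $ i $ j))" by (simp add: Min_ge_iff)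
  qed
  finally show ?thesis .
qed

lemma min_attained:
  fixes W :: "real^'n::finite^'m::finite"
  assumes m2: "CARD('m) \<ge> 2" and ch: "channel W"
  shows "max (Max (range (\<lambda>j. \<Sum>i\<in>UNIV. W $ i $ j)) - real CARD('m) + 1) 0 \<in> P_values W 1"
proof -
  define M where "M = (\<lambda>i j. W $ i $ j)"
  define c where "c = (\<lambda>j. \<Sum>i\<in>UNIV. M i j)"
  define C where "C = {f::'m\<Rightarrow>'n. \<exists>j. f = (\<lambda>_. j)}"
  define K where "K = real CARD('m) - 1"
  have nn: "\<forall>i j. M i j \<ge> 0" and rs: "\<forall>i. (\<Sum>j\<in>UNIV. M i j) = 1"
    using ch unfolding channel_def M_def by auto
  define g where "g = Max (range c)"
  have gin: "g \<in> range c" unfolding g_def by (rule Max_in) auto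
  then obtain js where js: "c js = g" by (elim rangeE) simp
  have cle: "c j \<le> g" for j unfolding g_def by simp
  have gdef: "Max (range (\<lambda>j. \<Sum>i\<in>UNIV. W $ i $ j)) = g" unfolding g_def c_def M_def by simp
  show ?thesis
  proof (cases "g - real CARD('m) + 1 \<le> 0")
    case True
    have cs: "\<forall>j. (\<Sum>i\<in>UNIV. M i j) \<le> (real CARD('m) - 1) * 1"
      using cle True unfolding c_def by (smt (verit))
    obtain \<mu> where mu: "\<forall>f. \<mu> f \<ge> 0" "\<forall>f. (\<exists>j. f = (\<lambda>_. j)) \<longrightarrow> \<mu> f = 0"
        "\<forall>i j. M i j = (\<Sum>f\<in>{f. f i = j}. \<mu> f)"
      using decomp_nc[OF m2 nn rs cs] by blast
    have "(\<Sum>f\<in>C. \<mu> f) \<in> P_values W 1" unfolding C_def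
      by (rule mu_to_lam[OF ch mu(1)]) (use mu(3) in \<open>simp add: M_def\<close>)
    moreover have "(\<Sum>f\<in>C. \<mu> f) = 0" unfolding C_def using mu(2) by simp
    ultimately show ?thesis using True gdef by simp
  next
    case False
    define T where "T = g - real CARD('m) + 1"
    have Tpos: "T > 0" using False unfolding T_def by simp
    have ent: "M i j \<le> 1" for i j using entry_le[OF nn rs[rule_format]] .
    have TM: "T \<le> M i js" for i
    proof -
      have "c js = M i js + (\<Sum>i'\<in>UNIV - {i}. M i' js)" unfolding c_def by (simp add: sum.remove)
      moreover have "(\<Sum>i'\<in>UNIV - {i}. M i' js) \<le> of_nat (card (UNIV - {i})) * 1"
        by (rule sum_bounded_above) (use ent in auto)
      moreover have "card (UNIV - {i}) = CARD('m) - 1" by (simp add: card_Diff_singleton)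
      ultimately show ?thesis using js m2 unfolding T_def by (simp add: of_nat_diff)
    qed
    have T1: "T \<le> 1" using TM[of undefined] ent[of undefined js] by simp
    define W' where "W' = (\<lambda>i j. M i j - T * ind (\<lambda>_. js) i j)"
    have nn': "\<forall>i j. W' i j \<ge> 0" unfolding W'_def ind_def using nn TM by auto
    have rs': "\<forall>i. (\<Sum>j\<in>UNIV. W' i j) = 1 - T" unfolding W'_def
      by (intro allI rowsum_sub) (use rs in blast)
    have ctot: "(\<Sum>j\<in>UNIV. c j) = real CARD('m) * 1" unfolding c_def by (rule colsum_total[OF rs])
    have cnn: "\<forall>j. c j \<ge> 0" unfolding c_def using nn by (simp add: sum_nonneg)
    have cs': "\<forall>j. (\<Sum>i\<in>UNIV. W' i j) \<le> (real CARD('m) - 1) * (1 - T)"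
    proof
      fix j
      have c': "(\<Sum>i\<in>UNIV. W' i j) = c j - T * real (card {i::'m. js = j})"
        unfolding W'_def c_def by (simp add: sum_subtractf sum_distrib_left[symmetric] ind_colsum)
      show "(\<Sum>i\<in>UNIV. W' i j) \<le> (real CARD('m) - 1) * (1 - T)"
      proof (cases "j = js")
        case True
        hence "(\<Sum>i\<in>UNIV. W' i j) = g - T * real CARD('m)" using c' js by simp
        thus ?thesis unfolding T_def by (simp add: algebra_simps)
      next
        case False
        hence "(\<Sum>i\<in>UNIV. W' i j) = c j" using c' by simp
        moreover have "c js + c j \<le> real CARD('m)" using sum_pair_le[OF cnn False[symmetric]] ctot by simp
        moreover have "(1 - T) * 1 \<le> (1 - T) * (real CARD('m) - 1)"
          using T1 m2 by (intro mult_left_mono) auto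
        ultimately show ?thesis using js unfolding T_def by (simp add: algebra_simps)
      qed
    qed
    obtain \<mu> where mu: "\<forall>f. \<mu> f \<ge> 0" "\<forall>f. (\<exists>j. f = (\<lambda>_. j)) \<longrightarrow> \<mu> f = 0"
        "\<forall>i j. W' i j = (\<Sum>f\<in>{f. f i = j}. \<mu> f)"
      using decomp_nc[OF m2 nn' rs' cs'] by blast
    define \<nu> where "\<nu> = (\<lambda>f. \<mu> f + (if f = (\<lambda>_. js) then T else 0))"
    have dec: "\<forall>i j. W $ i $ j = (\<Sum>f\<in>{f. f i = j}. \<nu> f)"
    proof (intro allI)
      fix i j
      have "(\<Sum>f\<in>{f. f i = j}. \<nu> f) = (\<Sum>f\<in>{f. f i = j}. \<mu> f) + (\<Sum>f\<in>{f. f i = j}. (if f = (\<lambda>_. js) then T else 0))"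
        unfolding \<nu>_def by (simp add: sum.distrib)
      also have "(\<Sum>f\<in>{f. f i = j}. (if f = (\<lambda>_. js) then T else 0)) = T * ind (\<lambda>_. js) i j"
        by (simp add: ind_def)
      finally show "W $ i $ j = (\<Sum>f\<in>{f. f i = j}. \<nu> f)"
        using mu(3)[rule_format, of i j] unfolding W'_def M_def by linarith
    qed
    have nu0: "\<forall>f. \<nu> f \<ge> 0" unfolding \<nu>_def using mu(1) Tpos by simp
    have "(\<Sum>f\<in>C. \<nu> f) \<in> P_values W 1" unfolding C_def by (rule mu_to_lam[OF ch nu0 dec])
    moreover have "(\<Sum>f\<in>C. \<nu> f) = T"
    proof -
      have "(\<Sum>f\<in>C. \<nu> f) = (\<Sum>f\<in>C. \<mu> f) + (\<Sum>f\<in>C. (if f = (\<lambda>_. js) then T else 0))"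
        unfolding \<nu>_def by (simp add: sum.distrib)
      moreover have "(\<Sum>f\<in>C. \<mu> f) = 0" unfolding C_def using mu(2) by simp
      moreover have "(\<Sum>f\<in>C. (if f = (\<lambda>_. js) then T else 0)) = T" unfolding C_def by auto
      ultimately show ?thesis by simp
    qed
    ultimately show ?thesis using False gdef Tpos unfolding T_def by simp
  qed
qed

lemma max_attained:
  fixes W :: "real^'n::finite^'m::finite"
  assumes ch: "channel W"
  shows "(\<Sum>j\<in>UNIV. Min (range (\<lambda>i. W $ i $ j))) \<in> P_values W 1"
proof -
  define M where "M = (\<lambda>i j. W $ i $ j)"
  define \<alpha> where "\<alpha> = (\<lambda>j. Min (range (\<lambda>i. M i j)))"
  define C where "C = {f::'m\<Rightarrow>'n. \<exists>j. f = (\<lambda>_. j)}"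
  have nn: "\<forall>i j. M i j \<ge> 0" and rs: "\<forall>i. (\<Sum>j\<in>UNIV. M i j) = 1"
    using ch unfolding channel_def M_def by auto
  have ale: "\<alpha> j \<le> M i j" for i j unfolding \<alpha>_def by simp
  have a0: "\<alpha> j \<ge> 0" for j unfolding \<alpha>_def using nn by (simp add: Min_ge_iff)
  define R where "R = (\<lambda>i j. M i j - \<alpha> j)"
  have nnR: "\<forall>i j. R i j \<ge> 0" unfolding R_def using ale by simp
  have rsR: "\<forall>i. (\<Sum>j\<in>UNIV. R i j) = 1 - (\<Sum>j\<in>UNIV. \<alpha> j)"
    unfolding R_def using rs by (simp add: sum_subtractf)
  obtain \<mu> where mu: "\<forall>f. \<mu> f \<ge> 0" "\<forall>i j. R i j = (\<Sum>f\<in>{f. f i = j}. \<mu> f)"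
    using decomp_any[OF nnR rsR] by blast
  define \<beta> where "\<beta> = (\<lambda>f::'m\<Rightarrow>'n. if f \<in> C then \<alpha> (f undefined) else 0)"
  define \<nu> where "\<nu> = (\<lambda>f. \<mu> f + \<beta> f)"
  have bsum: "(\<Sum>f\<in>{f. f i = j}. \<beta> f) = \<alpha> j" for i j
  proof -
    have "(\<Sum>f\<in>{f. f i = j}. \<beta> f) = (\<Sum>f\<in>{f. f i = j}. if f = (\<lambda>_. j) then \<alpha> j else 0)"
      by (rule sum.cong) (auto simp: \<beta>_def C_def)
    also have "\<dots> = \<alpha> j" by simp
    finally show ?thesis .
  qed
  have dec: "\<forall>i j. W $ i $ j = (\<Sum>f\<in>{f. f i = j}. \<nu> f)"
  proof (intro allI)
    fix i j
    have "(\<Sum>f\<in>{f. f i = j}. \<nu> f) = (\<Sum>f\<in>{f. f i = j}. \<mu> f) + (\<Sum>f\<in>{f. f i = j}. \<beta> f)"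
      unfolding \<nu>_def by (simp add: sum.distrib)
    thus "W $ i $ j = (\<Sum>f\<in>{f. f i = j}. \<nu> f)"
      using mu(2)[rule_format, of i j] bsum[of i j] unfolding R_def M_def by linarith
  qed
  have b0: "\<forall>f. \<beta> f \<ge> 0" unfolding \<beta>_def using a0 by simp
  have nu0: "\<forall>f. \<nu> f \<ge> 0" unfolding \<nu>_def using mu(1) b0 by (simp add: add_nonneg_nonneg)
  have inP: "(\<Sum>f\<in>C. \<nu> f) \<in> P_values W 1" unfolding C_def by (rule mu_to_lam[OF ch nu0 dec])
  have "(\<Sum>f\<in>C. \<nu> f) \<ge> (\<Sum>f\<in>C. \<beta> f)" unfolding \<nu>_def using mu(1) by (intro sum_mono) simp
  moreover have "(\<Sum>f\<in>C. \<beta> f) = (\<Sum>j\<in>UNIV. \<alpha> j)"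
    unfolding C_def const_sum by (rule sum.cong) (auto simp: \<beta>_def C_def)
  moreover have "(\<Sum>f\<in>C. \<nu> f) \<le> (\<Sum>j\<in>UNIV. \<alpha> j)" using upper_bound[OF inP] unfolding \<alpha>_def M_def .
  ultimately have "(\<Sum>f\<in>C. \<nu> f) = (\<Sum>j\<in>UNIV. Min (range (\<lambda>i. W $ i $ j)))"
    unfolding \<alpha>_def M_def by simp
  thus ?thesis using inP by simp
qed

theorem proposition7:
  fixes W :: "real^'n^'m"
  assumes "CARD('m) \<ge> 2" and "CARD('n) \<ge> 2"
    and "channel W"
  shows "is_min (P_values W 1)
           (max (Max (range (\<lambda>j. \<Sum>i\<in>UNIV. W $ i $ j)) - real CARD('m) + 1) 0)
       \<and> is_max (P_values W 1) (\<Sum>j\<in>UNIV. Min (range (\<lambda>i. W $ i $ j)))"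
  unfolding is_min_def is_max_def
  using min_attained[OF assms(1) assms(3)] max_attained[OF assms(3)] lower_bound upper_bound
  by blast

end
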